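(* Let $m\ge2$, $\lambda\in\mathbb{D}$, $\mathcal{D}=\{d_1,\ldots,d_m\}\subset\mathbb{C}$, and let $E=\{\sum_{n=0}^\infty a_n\lambda^n:a_n\in\mathcal{D}\}$ be the attractor of the IFS $\{f_j(z)=\lambda z+d_j\}_{j=1}^m$. If $E$ is post-critically finite and connected, then $E$ has bounded turning.
   Context: Let $E_j=f_j(E)$ and $\mathcal{O}=\bigcup_{i\ne j}(E_i\cap E_j)$ (the overlap set). Let $\pi:\mathcal{D}^{\mathbb{N}}\to E$, $\pi(\mathbf{a})=\sum_{n\ge0}a_n\lambda^n$. $E$ is post-critically finite if $\mathcal{O}$ is finite and every sequence in $\pi^{-1}(\mathcal{O})$ is eventually periodic. A connected set $X\subset\mathbb{C}$ has bounded turning if there is $L$ such that for all $z_0,z_1\in X$ there is a connected set $[z_0,z_1]\subset X$ containing $z_0,z_1$ with $\operatorname{diam}[z_0,z_1]\le L|z_0-z_1|$. *)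

theory Defs
  imports "HOL-Analysis.Analysis"
begin

definition coding :: "complex \<Rightarrow> (nat \<Rightarrow> complex) \<Rightarrow> complex" where
  "coding lam a = (\<Sum>n. a n * lam ^ n)"

definition attractor :: "complex \<Rightarrow> complex set \<Rightarrow> complex set" where
  "attractor lam D = {coding lam a | a. \<forall>n. a n \<in> D}"

definition overlap_set :: "complex \<Rightarrow> complex set \<Rightarrow> complex set" where
  "overlap_set lam D = (\<Union>d\<in>D. \<Union>d'\<in>D - {d}.
      ((\<lambda>z. lam * z + d) ` attractor lam D) \<inter> ((\<lambda>z. lam * z + d') ` attractor lam D))"

definition eventually_periodic :: "(nat \<Rightarrow> 'a) \<Rightarrow> bool" where
  "eventually_periodic a = (\<exists>N p. p > 0 \<and> (\<forall>n\<ge>N. a (n + p) = a n))"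

definition post_critically_finite :: "complex \<Rightarrow> complex set \<Rightarrow> bool" where
  "post_critically_finite lam D \<longleftrightarrow>
     finite (overlap_set lam D) \<and>
     (\<forall>a. (\<forall>n. a n \<in> D) \<and> coding lam a \<in> overlap_set lam D \<longrightarrow> eventually_periodic a)"

definition bounded_turning :: "complex set \<Rightarrow> bool" where
  "bounded_turning X \<longleftrightarrow> (\<exists>L. \<forall>z0\<in>X. \<forall>z1\<in>X. \<exists>C. C \<subseteq> X \<and> connected C \<and>
      z0 \<in> C \<and> z1 \<in> C \<and> diameter C \<le> L * dist z0 z1)"

end

theory Submission imports Defs begin


lemma digit_subseq:
  fixes D :: "complex set" and c :: "nat \<Rightarrow> nat \<Rightarrow> complex"
  assumes "finite D" and "\<And>k n. c k n \<in> D"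
  shows "\<exists>r \<alpha>. strict_mono r \<and> (\<forall>n. \<alpha> n \<in> D) \<and>
           (\<forall>L. eventually (\<lambda>k. \<forall>i<L. c (r k) i = \<alpha> i) sequentially)"
proof -
  have "compactin (product_topology (\<lambda>_. euclidean) UNIV) (PiE UNIV (\<lambda>_::nat. D))"
    using assms(1) by (simp add: compactin_PiE finite_imp_compact)
  then have cp: "compact {a::nat\<Rightarrow>complex. \<forall>n. a n \<in> D}"
    by (simp add: euclidean_product_topology PiE_UNIV_domain Pi_def)
  have "\<forall>k. c k \<in> {a::nat\<Rightarrow>complex. \<forall>n. a n \<in> D}" using assms(2) by auto
  from compact_imp_seq_compact[OF cp] this obtain l r where
    l: "l \<in> {a::nat\<Rightarrow>complex. \<forall>n. a n \<in> D}" and r: "strict_mono r" and lim: "(c \<circ> r) \<longlonglongrightarrow> l"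
    unfolding seq_compact_def by meson
  have ev: "eventually (\<lambda>k. c (r k) i = l i) sequentially" for i
  proof -
    have "continuous_on UNIV (\<lambda>x::nat\<Rightarrow>complex. x i)" by (rule continuous_on_product_coordinates)
    then have "isCont (\<lambda>x::nat\<Rightarrow>complex. x i) l"
      using continuous_on_eq_continuous_at[OF open_UNIV] by blast
    then have t: "(\<lambda>k. c (r k) i) \<longlonglongrightarrow> l i"
      using isCont_tendsto_compose[OF _ lim] by (simp add: o_def)
    have "open (- (D - {l i}))" by (intro open_Compl finite_imp_closed) (use assms(1) in simp)
    moreover have "l i \<in> - (D - {l i})" by simp
    ultimately have "eventually (\<lambda>k. c (r k) i \<in> - (D - {l i})) sequentially"
      by (rule topological_tendstoD[OF t])
    then show ?thesis by (rule eventually_mono) (use assms(2) in auto)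
  qed
  have "eventually (\<lambda>k. \<forall>i<L. c (r k) i = l i) sequentially" for L
  proof (induction L)
    case 0 show ?case by simp
  next
    case (Suc L)
    from eventually_conj[OF Suc ev[of L]] show ?case
      by eventually_elim (auto simp: less_Suc_eq)
  qed
  then show ?thesis using l r by blast
qed

definition sh :: "(nat \<Rightarrow> 'a) \<Rightarrow> nat \<Rightarrow> nat \<Rightarrow> 'a" where
  "sh a m = (\<lambda>i. a (i + m))"

definition pre :: "complex \<Rightarrow> (nat \<Rightarrow> complex) \<Rightarrow> nat \<Rightarrow> complex" where
  "pre lam a n = (\<Sum>i<n. a i * lam ^ i)"

definition cat :: "(nat \<Rightarrow> 'a) \<Rightarrow> nat \<Rightarrow> (nat \<Rightarrow> 'a) \<Rightarrow> nat \<Rightarrow> 'a" where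
  "cat a n g = (\<lambda>i. if i < n then a i else g (i - n))"

lemma sh_sh: "sh (sh a i) j = sh a (j + i)"
  by (simp add: sh_def add.assoc)

lemma sh_cat: "sh (cat a n g) n = g"
  by (simp add: sh_def cat_def)

lemma pre_cat: "pre lam (cat a n g) n = pre lam a n"
  by (simp add: pre_def cat_def)

lemma pre_cong: "\<forall>i<n. a i = b i \<Longrightarrow> pre lam a n = pre lam b n"
  by (simp add: pre_def)

lemma pre_Suc: "pre lam a (Suc n) = pre lam a n + a n * lam ^ n"
  by (simp add: pre_def)

lemma sh_in: "\<forall>n. a n \<in> D \<Longrightarrow> \<forall>n. sh a m n \<in> D"
  by (simp add: sh_def)

lemma cat_in: "\<forall>n. a n \<in> D \<Longrightarrow> \<forall>n. g n \<in> D \<Longrightarrow> \<forall>n. cat a m g n \<in> D"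
  by (simp add: cat_def)

context
  fixes lam :: complex and D :: "complex set"
  assumes lam1: "norm lam < 1" and finD: "finite D"
begin

lemma digits_bounded: "\<exists>M\<ge>0. \<forall>d\<in>D. norm d \<le> M"
proof -
  obtain M where "\<forall>d\<in>D. norm d \<le> M"
    using finite_imp_bounded[OF finD] bounded_iff by blast
  then show ?thesis by (intro exI[of _ "max M 0"]) auto
qed

lemma summ:
  assumes "\<forall>n. a n \<in> D"
  shows "summable (\<lambda>n. a n * lam ^ n)"
proof -
  obtain M where M: "M \<ge> 0" "\<forall>d\<in>D. norm d \<le> M" using digits_bounded by blast
  have sg: "summable (\<lambda>n. M * norm lam ^ n)"
    using lam1 by (intro summable_mult summable_geometric) simp
  show ?thesis
    by (rule summable_comparison_test'[OF sg, of 0]) (use M assms in \<open>auto simp: norm_mult norm_power intro!: mult_right_mono\<close>)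
qed

lemma split:
  assumes "\<forall>n. a n \<in> D"
  shows "coding lam a = pre lam a n + lam ^ n * coding lam (sh a n)"
proof -
  have s: "summable (\<lambda>i. a i * lam ^ i)" using summ assms by blast
  have s2: "summable (\<lambda>i. sh a n i * lam ^ i)" using summ sh_in assms by blast
  have "coding lam a = (\<Sum>i. a (i + n) * lam ^ (i + n)) + pre lam a n"
    unfolding coding_def pre_def using suminf_split_initial_segment[OF s] by simp
  also have "(\<Sum>i. a (i + n) * lam ^ (i + n)) = (\<Sum>i. lam ^ n * (sh a n i * lam ^ i))"
    by (simp add: sh_def power_add algebra_simps)
  also have "\<dots> = lam ^ n * coding lam (sh a n)"
    unfolding coding_def by (rule suminf_mult[OF s2])
  finally show ?thesis by simp
qed

lemma cod_bound: "\<exists>B\<ge>0. \<forall>a. (\<forall>n. a n \<in> D) \<longrightarrow> norm (coding lam a) \<le> B"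
proof -
  obtain M where M: "M \<ge> 0" "\<forall>d\<in>D. norm d \<le> M" using digits_bounded by blast
  have sg: "summable (\<lambda>n. M * norm lam ^ n)"
    using lam1 by (intro summable_mult summable_geometric) simp
  have "norm (coding lam a) \<le> (\<Sum>n. M * norm lam ^ n)" if "\<forall>n. a n \<in> D" for a
    unfolding coding_def
    by (rule norm_suminf_le[OF _ sg]) (use M that in \<open>auto simp: norm_mult norm_power intro!: mult_right_mono\<close>)
  moreover have "(\<Sum>n. M * norm lam ^ n) \<ge> 0"
    using sg M by (intro suminf_nonneg) auto
  ultimately show ?thesis by blast
qed

lemma cat_cod:
  assumes "\<forall>n. a n \<in> D" "\<forall>n. g n \<in> D"
  shows "coding lam (cat a n g) = pre lam a n + lam ^ n * coding lam g"
  using split[OF cat_in[OF assms], of n n] by (simp add: sh_cat pre_cat)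

lemma same_tail:
  assumes "\<forall>n. a n \<in> D" "\<forall>n. b n \<in> D" "coding lam a = coding lam b" "\<forall>i<n. a i = b i" "lam \<noteq> 0"
  shows "coding lam (sh a n) = coding lam (sh b n)"
proof -
  have "pre lam a n + lam ^ n * coding lam (sh a n) = pre lam b n + lam ^ n * coding lam (sh b n)"
    using split[OF assms(1), of n] split[OF assms(2), of n] assms(3) by simp
  then show ?thesis using pre_cong[OF assms(4)] assms(5) by simp
qed

lemma agree:
  obtains B where "B \<ge> 0" "\<And>a b L. \<forall>n. a n \<in> D \<Longrightarrow> \<forall>n. b n \<in> D \<Longrightarrow> \<forall>i<L. a i = b i \<Longrightarrow>
      norm (coding lam a - coding lam b) \<le> norm lam ^ L * (2 * B)"
proof -
  obtain B where B: "B \<ge> 0" "\<forall>a. (\<forall>n. a n \<in> D) \<longrightarrow> norm (coding lam a) \<le> B"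
    using cod_bound by blast
  have "norm (coding lam a - coding lam b) \<le> norm lam ^ L * (2 * B)"
    if a: "\<forall>n. a n \<in> D" and b: "\<forall>n. b n \<in> D" and ag: "\<forall>i<L. a i = b i" for a b L
  proof -
    have "coding lam a - coding lam b = lam ^ L * (coding lam (sh a L) - coding lam (sh b L))"
      using split[OF a, of L] split[OF b, of L] pre_cong[OF ag] by (simp add: algebra_simps)
    also have "norm \<dots> \<le> norm lam ^ L * (2 * B)"
    proof -
      have n1: "norm (coding lam (sh a L)) \<le> B" using B(2) sh_in[OF a] by blast
      have n2: "norm (coding lam (sh b L)) \<le> B" using B(2) sh_in[OF b] by blast
      have "norm (coding lam (sh a L) - coding lam (sh b L)) \<le> B + B"
        using norm_triangle_ineq4[of "coding lam (sh a L)" "coding lam (sh b L)"] n1 n2 by linarith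
      then show ?thesis by (simp add: norm_mult norm_power mult_left_mono)
    qed
    finally show ?thesis .
  qed
  then show ?thesis using that B(1) by blast
qed

lemma attr_iff: "z \<in> attractor lam D \<longleftrightarrow> (\<exists>a. (\<forall>n. a n \<in> D) \<and> z = coding lam a)"
  by (auto simp: attractor_def)

lemma compact_E: "compact (attractor lam D)"
proof -
  obtain B where B: "B \<ge> 0" "\<And>a b L. \<forall>n. a n \<in> D \<Longrightarrow> \<forall>n. b n \<in> D \<Longrightarrow> \<forall>i<L. a i = b i \<Longrightarrow>
      norm (coding lam a - coding lam b) \<le> norm lam ^ L * (2 * B)" using agree by blast
  have "seq_compact (attractor lam D)"
    unfolding seq_compact_def
  proof (intro allI impI)
    fix f :: "nat \<Rightarrow> complex" assume f: "\<forall>n. f n \<in> attractor lam D"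
    then have "\<forall>k. \<exists>a. (\<forall>n. a n \<in> D) \<and> f k = coding lam a" by (simp add: attr_iff)
    then obtain c :: "nat \<Rightarrow> nat \<Rightarrow> complex" where c: "\<And>k. (\<forall>n. c k n \<in> D)" "\<And>k. f k = coding lam (c k)" by metis
    obtain r \<alpha> where r: "strict_mono r" and al: "\<forall>n. \<alpha> n \<in> D"
      and ev: "\<And>L. eventually (\<lambda>k. \<forall>i<L. c (r k) i = \<alpha> i) sequentially"
      using digit_subseq[OF finD, of c] c(1) by blast
    have "(f \<circ> r) \<longlonglongrightarrow> coding lam \<alpha>"
    proof (rule tendstoI)
      fix e :: real assume e: "e > 0"
      have "(\<lambda>L. norm lam ^ L * (2 * B)) \<longlonglongrightarrow> 0 * (2 * B)"
        by (intro tendsto_intros) (use lam1 in auto)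
      then have "eventually (\<lambda>L. norm lam ^ L * (2 * B) < e) sequentially"
        using e by (simp add: order_tendsto_iff)
      then obtain L where L: "norm lam ^ L * (2 * B) < e" by (meson eventually_sequentially order.refl)
      show "eventually (\<lambda>k. dist ((f \<circ> r) k) (coding lam \<alpha>) < e) sequentially"
        using ev[of L] proof eventually_elim
        case (elim k)
        then show ?case using B(2)[OF c(1) al elim] L c(2) by (simp add: dist_norm)
      qed
    qed
    moreover have "coding lam \<alpha> \<in> attractor lam D" using al by (auto simp: attr_iff)
    ultimately show "\<exists>l\<in>attractor lam D. \<exists>r. strict_mono r \<and> (f \<circ> r) \<longlonglongrightarrow> l"
      using r by blast
  qed
  then show ?thesis by (simp add: compact_eq_seq_compact_metric)
qed

end


lemma ev_per_tails:
  assumes "eventually_periodic \<alpha>"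
  shows "finite (range (sh \<alpha>))"
proof -
  obtain N p where p: "p > 0" "\<forall>n\<ge>N. \<alpha> (n + p) = \<alpha> n"
    using assms unfolding eventually_periodic_def by blast
  have k: "\<alpha> (n + k * p) = \<alpha> n" if "n \<ge> N" for n k
  proof (induction k)
    case (Suc k)
    have "\<alpha> (n + Suc k * p) = \<alpha> ((n + k * p) + p)" by (simp add: algebra_simps)
    also have "\<dots> = \<alpha> (n + k * p)" using p(2) that by simp
    finally show ?case using Suc by simp
  qed simp
  have "sh \<alpha> m \<in> sh \<alpha> ` {..<N+p}" for m
  proof (cases "m < N + p")
    case True then show ?thesis by blast
  next
    case False
    define m' where "m' = N + (m - N) mod p"
    have m: "m = m' + ((m - N) div p) * p"
      using mod_div_mult_eq[of "m - N" p] False unfolding m'_def by linarith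
    have "sh \<alpha> m = sh \<alpha> m'"
    proof
      fix i
      have "sh \<alpha> m i = \<alpha> ((i + m') + ((m - N) div p) * p)" unfolding sh_def
        by (subst m) (simp add: algebra_simps)
      also have "\<dots> = \<alpha> (i + m')" by (rule k) (simp add: m'_def)
      finally show "sh \<alpha> m i = sh \<alpha> m' i" by (simp add: sh_def)
    qed
    moreover have "m' < N + p" using p(1) unfolding m'_def by simp
    ultimately show ?thesis by blast
  qed
  then have "range (sh \<alpha>) \<subseteq> sh \<alpha> ` {..<N+p}" by blast
  then show ?thesis using finite_subset by blast
qed

context
  fixes lam :: complex and D :: "complex set"
  assumes lam1: "norm lam < 1" and finD: "finite D"
begin

lemma ov:
  assumes a: "\<forall>n. a n \<in> D" and b: "\<forall>n. b n \<in> D" and eq: "coding lam a = coding lam b"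
    and ne: "a 0 \<noteq> b 0"
  shows "coding lam a \<in> overlap_set lam D"
proof -
  have 1: "coding lam a = lam * coding lam (sh a 1) + a 0"
    using split[OF lam1 finD a, of 1] by (simp add: pre_def)
  have 2: "coding lam b = lam * coding lam (sh b 1) + b 0"
    using split[OF lam1 finD b, of 1] by (simp add: pre_def)
  have "coding lam a \<in> (\<lambda>z. lam * z + a 0) ` attractor lam D"
    using 1 sh_in[OF a] by (auto simp: attractor_def)
  moreover have "coding lam a \<in> (\<lambda>z. lam * z + b 0) ` attractor lam D"
    using 2 eq sh_in[OF b] by (auto simp: attractor_def)
  ultimately show ?thesis unfolding overlap_set_def using a b ne by blast
qed

definition "PP = {coding lam (sh c m) | c m. (\<forall>n. c n \<in> D) \<and> coding lam c \<in> overlap_set lam D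
     \<and> (\<forall>i. 0 < i \<and> i < m \<longrightarrow> coding lam (sh c i) \<notin> overlap_set lam D)}"

lemma in_PP:
  "(\<forall>n. c n \<in> D) \<Longrightarrow> coding lam c \<in> overlap_set lam D \<Longrightarrow> coding lam (sh c m) \<in> PP"
proof (induction m arbitrary: c rule: less_induct)
  case (less m)
  show ?case
  proof (cases "\<exists>i. 0 < i \<and> i < m \<and> coding lam (sh c i) \<in> overlap_set lam D")
    case True
    then obtain i where i: "0 < i" "i < m" "coding lam (sh c i) \<in> overlap_set lam D" by blast
    have "coding lam (sh (sh c i) (m - i)) \<in> PP"
      using less.IH[of "m - i" "sh c i"] i sh_in[OF less.prems(1)] by simp
    moreover have "sh (sh c i) (m - i) = sh c m" using i by (simp add: sh_sh)
    ultimately show ?thesis by simp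
  next
    case False
    then show ?thesis using less.prems unfolding PP_def by blast
  qed
qed

lemma finite_PP:
  assumes pcf: "post_critically_finite lam D" and lam0: "lam \<noteq> 0"
  shows "finite PP"
proof (rule ccontr)
  let ?O = "overlap_set lam D"
  have finO: "finite ?O" using pcf unfolding post_critically_finite_def by blast
  assume "\<not> finite PP"
  then obtain y :: "nat \<Rightarrow> complex" where y: "inj y" "range y \<subseteq> PP" using infinite_countable_subset by blast
  have "\<forall>k. \<exists>c m. (\<forall>n. c n \<in> D) \<and> coding lam c \<in> ?O
     \<and> (\<forall>i. 0 < i \<and> i < m \<longrightarrow> coding lam (sh c i) \<notin> ?O) \<and> y k = coding lam (sh c m)"
    using y(2) unfolding PP_def by blast
  then obtain c :: "nat \<Rightarrow> nat \<Rightarrow> complex" and m :: "nat \<Rightarrow> nat" where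
    c: "\<And>k. \<forall>n. c k n \<in> D" "\<And>k. coding lam (c k) \<in> ?O"
       "\<And>k i. 0 < i \<Longrightarrow> i < m k \<Longrightarrow> coding lam (sh (c k) i) \<notin> ?O"
       "\<And>k. y k = coding lam (sh (c k) (m k))"
    by metis
  obtain r \<alpha> where r: "strict_mono r" and al: "\<forall>n. \<alpha> n \<in> D"
      and ev: "\<And>L. eventually (\<lambda>k. \<forall>i<L. c (r k) i = \<alpha> i) sequentially"
      using digit_subseq[OF finD, of c] c(1) by blast
  obtain B where B: "B \<ge> 0" "\<And>a b L. \<forall>n. a n \<in> D \<Longrightarrow> \<forall>n. b n \<in> D \<Longrightarrow> \<forall>i<L. a i = b i \<Longrightarrow>
      norm (coding lam a - coding lam b) \<le> norm lam ^ L * (2 * B)" using agree[OF lam1 finD] by blast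
  define S where "S = (\<lambda>q. dist q (coding lam \<alpha>)) ` (?O - {coding lam \<alpha>})"
  define \<delta> where "\<delta> = Min (insert 1 S)"
  have finS: "finite S" using finO unfolding S_def by simp
  have dpos: "\<delta> > 0" unfolding \<delta>_def using finS by (simp add: Min_gr_iff S_def)
  have dle: "\<delta> \<le> dist q (coding lam \<alpha>)" if "q \<in> ?O" "q \<noteq> coding lam \<alpha>" for q
    unfolding \<delta>_def using finS that by (intro Min_le) (auto simp: S_def)
  have "(\<lambda>L. norm lam ^ L * (2 * B)) \<longlonglongrightarrow> 0 * (2 * B)"
    by (intro tendsto_intros) (use lam1 in auto)
  then have "eventually (\<lambda>L. norm lam ^ L * (2 * B) < \<delta>) sequentially"
    using dpos by (simp add: order_tendsto_iff)
  then obtain L where L: "norm lam ^ L * (2 * B) < \<delta>" by (meson eventually_sequentially order.refl)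
  have evc: "eventually (\<lambda>k. coding lam (c (r k)) = coding lam \<alpha> \<and> c (r k) 0 = \<alpha> 0) sequentially"
    using eventually_conj[OF ev[of L] ev[of 1]]
  proof (rule eventually_mono)
    fix k assume elim: "(\<forall>i<L. c (r k) i = \<alpha> i) \<and> (\<forall>i<1. c (r k) i = \<alpha> i)"
    have "norm (coding lam (c (r k)) - coding lam \<alpha>) \<le> norm lam ^ L * (2 * B)"
      by (rule B(2)[OF c(1) al]) (use elim in blast)
    then have lt: "dist (coding lam (c (r k))) (coding lam \<alpha>) < \<delta>"
      using L by (simp add: dist_norm)
    have "coding lam (c (r k)) = coding lam \<alpha>"
    proof (rule ccontr)
      assume "coding lam (c (r k)) \<noteq> coding lam \<alpha>"
      then have "\<delta> \<le> dist (coding lam (c (r k))) (coding lam \<alpha>)" by (rule dle[OF c(2)])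
      then show False using lt by simp
    qed
    moreover have "c (r k) 0 = \<alpha> 0" using elim by simp
    ultimately show "coding lam (c (r k)) = coding lam \<alpha> \<and> c (r k) 0 = \<alpha> 0" by simp
  qed
  then obtain K where K: "\<And>k. k \<ge> K \<Longrightarrow> coding lam (c (r k)) = coding lam \<alpha> \<and> c (r k) 0 = \<alpha> 0"
    by (auto simp: eventually_sequentially)
  have alO: "coding lam \<alpha> \<in> ?O" using K[of K] c(2)[of "r K"] by simp
  have "eventually_periodic \<alpha>" using pcf al alO unfolding post_critically_finite_def by blast
  then have finT: "finite (coding lam ` range (sh \<alpha>))" using ev_per_tails by blast
  have inT: "y (r k) \<in> coding lam ` range (sh \<alpha>)" if "k \<ge> K" for k
  proof -
    let ?c = "c (r k)" and ?m = "m (r k)"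
    have e: "coding lam ?c = coding lam \<alpha>" "?c 0 = \<alpha> 0" using K that by auto
    show ?thesis
    proof (cases "\<forall>i<?m. ?c i = \<alpha> i")
      case True
      then have "coding lam (sh ?c ?m) = coding lam (sh \<alpha> ?m)"
        using same_tail[OF lam1 finD c(1) al e(1) _ lam0] by blast
      then show ?thesis using c(4) by auto
    next
      case False
      then have ex: "\<exists>i. i < ?m \<and> ?c i \<noteq> \<alpha> i" by blast
      define i where "i = (LEAST i. i < ?m \<and> ?c i \<noteq> \<alpha> i)"
      have i12: "i < ?m \<and> ?c i \<noteq> \<alpha> i" unfolding i_def by (rule LeastI_ex[OF ex])
      have i3: "\<forall>j<i. ?c j = \<alpha> j"
      proof (intro allI impI)
        fix j assume "j < i"
        then have "\<not> (j < ?m \<and> ?c j \<noteq> \<alpha> j)" unfolding i_def by (rule not_less_Least)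
        then show "?c j = \<alpha> j" using \<open>j < i\<close> i12 by simp
      qed
      have i: "i < ?m" "?c i \<noteq> \<alpha> i" "\<forall>j<i. ?c j = \<alpha> j" using i12 i3 by auto
      have i0: "i > 0" using i e(2) by (cases i) auto
      have eq: "coding lam (sh ?c i) = coding lam (sh \<alpha> i)"
        using same_tail[OF lam1 finD c(1) al e(1) i(3) lam0] .
      have "coding lam (sh ?c i) \<in> ?O"
        by (rule ov[OF sh_in[OF c(1)] sh_in[OF al] eq]) (use i in \<open>simp add: sh_def\<close>)
      then show ?thesis using c(3)[OF i0 i(1)] by blast
    qed
  qed
  have ij: "inj (y \<circ> r)"
    using inj_compose[OF y(1) strict_mono_imp_inj_on[OF r, of UNIV]] .
  have "(y \<circ> r) ` {K..} \<subseteq> coding lam ` range (sh \<alpha>)" using inT by auto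
  then have "finite ((y \<circ> r) ` {K..})" using finT by (rule finite_subset)
  then have "finite {K..}"
    by (rule finite_imageD) (use ij in \<open>auto simp: inj_on_def\<close>)
  then show False using infinite_Ici[of K] by blast
qed

end


context
  fixes lam :: complex and D :: "complex set"
  assumes lam1: "norm lam < 1" and finD: "finite D"
begin

definition tt :: "(nat \<Rightarrow> complex) \<Rightarrow> (nat \<Rightarrow> complex) \<Rightarrow> nat \<Rightarrow> complex" where "tt a b n = (pre lam b n - pre lam a n) / lam ^ n"
definition FF :: "(nat \<Rightarrow> complex) \<Rightarrow> nat \<Rightarrow> complex \<Rightarrow> complex" where "FF a n z = pre lam a n + lam ^ n * z"

abbreviation "EE \<equiv> attractor lam D"
definition "Dif = {x - y |x y. x \<in> EE \<and> y \<in> EE}"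

lemma FF_in:
  assumes a: "\<forall>n. a n \<in> D" and z: "z \<in> EE"
  shows "FF a n z \<in> EE"
proof -
  obtain g where g: "\<forall>n. g n \<in> D" "z = coding lam g" using z by (auto simp: attractor_def)
  have "FF a n z = coding lam (cat a n g)"
    using cat_cod[OF lam1 finD a g(1)] g(2) by (simp add: FF_def)
  then show ?thesis using cat_in[OF a g(1)] by (auto simp: attractor_def)
qed

lemma cod_cell:
  assumes a: "\<forall>n. a n \<in> D"
  shows "coding lam a = FF a n (coding lam (sh a n))" "coding lam (sh a n) \<in> EE"
  using split[OF lam1 finD a, of n] sh_in[OF a, of n] by (auto simp: FF_def attractor_def)

lemma id1:
  assumes "lam \<noteq> 0"
  shows "FF a n z - FF b n w = lam ^ n * ((z - w) - tt a b n)"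
  using assms by (simp add: FF_def tt_def field_simps)

lemma id2:
  assumes "lam \<noteq> 0"
  shows "tt a b (Suc n) = (tt a b n + (b n - a n)) / lam"
  using assms by (simp add: tt_def pre_Suc field_simps)

lemma id3: "FF a (Suc n) z = FF a n (a n + lam * z)"
  by (simp add: FF_def pre_Suc algebra_simps)

lemma step_in:
  fixes a :: "nat \<Rightarrow> complex"
  assumes a: "\<forall>n. a n \<in> D" and z: "z \<in> EE"
  shows "a n + lam * z \<in> EE"
proof -
  have "FF (sh a n) 1 z = a n + lam * z" by (simp add: FF_def pre_def sh_def)
  then show ?thesis using FF_in[OF sh_in[OF a] z] by metis
qed

lemma N_sub:
  assumes lam0: "lam \<noteq> 0" and a: "\<forall>n. a n \<in> D" and b: "\<forall>n. b n \<in> D" and t: "tt a b n \<in> Dif"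
  shows "tt a b n \<in> insert 0 ((\<lambda>(p,q). p - q) ` (PP lam D \<times> PP lam D))"
proof -
  obtain z w where zw: "z \<in> EE" "w \<in> EE" "tt a b n = z - w" using t by (auto simp: Dif_def)
  obtain g where g: "\<forall>n. g n \<in> D" "z = coding lam g" using zw(1) by (auto simp: attractor_def)
  obtain h where h: "\<forall>n. h n \<in> D" "w = coding lam h" using zw(2) by (auto simp: attractor_def)
  define A where "A = cat a n g"
  define B where "B = cat b n h"
  have A: "\<forall>n. A n \<in> D" unfolding A_def using cat_in[OF a g(1)] .
  have B: "\<forall>n. B n \<in> D" unfolding B_def using cat_in[OF b h(1)] .
  have cA: "coding lam A = pre lam a n + lam ^ n * z" unfolding A_def using cat_cod[OF lam1 finD a g(1)] g(2) by simp
  have cB: "coding lam B = pre lam b n + lam ^ n * w" unfolding B_def using cat_cod[OF lam1 finD b h(1)] h(2) by simp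
  have "lam ^ n * (z - w) = pre lam b n - pre lam a n"
    using zw(3) lam0 by (simp add: tt_def field_simps)
  then have AB: "coding lam A = coding lam B" using cA cB by (simp add: algebra_simps)
  show ?thesis
  proof (cases "\<forall>i<n. A i = B i")
    case True
    have "pre lam a n = pre lam b n"
      using pre_cong[OF True, of lam] pre_cat[of lam a n g] pre_cat[of lam b n h]
      unfolding A_def B_def by simp
    then show ?thesis by (simp add: tt_def)
  next
    case False
    then have ex: "\<exists>i. i < n \<and> A i \<noteq> B i" by blast
    define i where "i = (LEAST i. i < n \<and> A i \<noteq> B i)"
    have i12: "i < n \<and> A i \<noteq> B i" unfolding i_def by (rule LeastI_ex[OF ex])
    have i3: "\<forall>j<i. A j = B j"
    proof (intro allI impI)
      fix j assume "j < i"
      then have "\<not> (j < n \<and> A j \<noteq> B j)" unfolding i_def by (rule not_less_Least)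
      then show "A j = B j" using \<open>j < i\<close> i12 by simp
    qed
    have eq: "coding lam (sh A i) = coding lam (sh B i)"
      using same_tail[OF lam1 finD A B AB i3 lam0] .
    have oA: "coding lam (sh A i) \<in> overlap_set lam D"
      by (rule ov[OF lam1 finD sh_in[OF A] sh_in[OF B] eq]) (use i12 in \<open>simp add: sh_def\<close>)
    have oB: "coding lam (sh B i) \<in> overlap_set lam D" using oA eq by simp
    have "sh (sh A i) (n - i) = g" using i12 by (simp add: sh_sh A_def sh_cat)
    then have zP: "z \<in> PP lam D"
      using in_PP[OF lam1 finD sh_in[OF A] oA, of "n - i"] g(2) by simp
    have "sh (sh B i) (n - i) = h" using i12 by (simp add: sh_sh B_def sh_cat)
    then have wP: "w \<in> PP lam D"
      using in_PP[OF lam1 finD sh_in[OF B] oB, of "n - i"] h(2) by simp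
    show ?thesis using zP wP zw(3) by force
  qed
qed

lemma sep:
  assumes lam0: "lam \<noteq> 0" and pcf: "post_critically_finite lam D" and Dne: "D \<noteq> {}"
  shows "\<exists>c0>0. \<forall>n a b. (\<forall>i. a i \<in> D) \<longrightarrow> (\<forall>i. b i \<in> D) \<longrightarrow> tt a b n \<notin> Dif \<longrightarrow>
           (\<forall>z\<in>EE. \<forall>w\<in>EE. c0 * norm lam ^ n \<le> norm (FF a n z - FF b n w))"
proof -
  define Ns where "Ns = insert 0 ((\<lambda>(p,q). p - q) ` (PP lam D \<times> PP lam D))"
  define Dd where "Dd = (\<lambda>(d,d'). d - d') ` (D \<times> D)"
  define N' where "N' = (\<lambda>(s,e). (s + e) / lam) ` (Ns \<times> Dd)"
  have finN': "finite N'"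
    unfolding N'_def Ns_def Dd_def using finite_PP[OF lam1 finD pcf lam0] finD by simp
  have cD: "compact Dif" unfolding Dif_def
    using compact_differences[OF compact_E[OF lam1 finD] compact_E[OF lam1 finD]] .
  obtain d0 where "d0 \<in> D" using Dne by blast
  then have "coding lam (\<lambda>_. d0) \<in> EE" by (auto simp: attractor_def)
  then have zD: "0 \<in> Dif" unfolding Dif_def by force
  define c0 where "c0 = Min (insert 1 ((\<lambda>t. infdist t Dif) ` (N' - Dif)))"
  have c0pos: "c0 > 0" unfolding c0_def using finN'
    by (simp add: Min_gr_iff infdist_pos_not_in_closed[OF compact_imp_closed[OF cD]] zD del: Diff_iff) (auto intro!: infdist_pos_not_in_closed[OF compact_imp_closed[OF cD]] zD)
  have c0le: "c0 \<le> dist t d" if "t \<in> N'" "t \<notin> Dif" "d \<in> Dif" for t d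
  proof -
    have "c0 \<le> infdist t Dif" unfolding c0_def by (rule Min_le) (use finN' that in auto)
    also have "\<dots> \<le> dist t d" by (rule infdist_le[OF that(3)])
    finally show ?thesis .
  qed
  have rho: "norm lam \<le> 1" using lam1 by simp
  have "\<forall>a b. (\<forall>i. a i \<in> D) \<longrightarrow> (\<forall>i. b i \<in> D) \<longrightarrow> tt a b n \<notin> Dif \<longrightarrow>
           (\<forall>z\<in>EE. \<forall>w\<in>EE. c0 * norm lam ^ n \<le> norm (FF a n z - FF b n w))" for n
  proof (induction n)
    case 0
    then show ?case using zD by (simp add: tt_def pre_def)
  next
    case (Suc n)
    show ?case
    proof (intro allI impI ballI)
      fix a b z w
      assume a: "\<forall>i. a i \<in> D" and b: "\<forall>i. b i \<in> D" and t': "tt a b (Suc n) \<notin> Dif"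
        and z: "z \<in> EE" and w: "w \<in> EE"
      show "c0 * norm lam ^ Suc n \<le> norm (FF a (Suc n) z - FF b (Suc n) w)"
      proof (cases "tt a b n \<in> Dif")
        case True
        have "tt a b n \<in> Ns" unfolding Ns_def using N_sub[OF lam0 a b True] .
        moreover have "b n - a n \<in> Dd" unfolding Dd_def using a b by force
        ultimately have "tt a b (Suc n) \<in> N'" unfolding N'_def id2[OF lam0] by force
        moreover have "z - w \<in> Dif" using z w unfolding Dif_def by blast
        ultimately have "c0 \<le> dist (tt a b (Suc n)) (z - w)" using c0le t' by blast
        then have "c0 \<le> norm ((z - w) - tt a b (Suc n))" by (simp add: dist_norm norm_minus_commute)
        then have "norm lam ^ Suc n * c0 \<le> norm lam ^ Suc n * norm ((z - w) - tt a b (Suc n))"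
          by (rule mult_left_mono) simp
        then have "c0 * norm lam ^ Suc n \<le> norm lam ^ Suc n * norm ((z - w) - tt a b (Suc n))"
          by (metis mult.commute)
        also have "\<dots> = norm (FF a (Suc n) z - FF b (Suc n) w)"
          by (simp add: id1[OF lam0] norm_mult norm_power)
        finally show ?thesis .
      next
        case False
        have "c0 * norm lam ^ n \<le> norm (FF a n (a n + lam * z) - FF b n (b n + lam * w))"
          using Suc.IH a b False step_in[OF a z] step_in[OF b w] by blast
        moreover have "c0 * norm lam ^ Suc n \<le> c0 * norm lam ^ n"
          using c0pos rho by (simp add: mult_left_mono mult_left_le_one_le)
        ultimately show ?thesis by (simp add: id3)
      qed
    qed
  qed
  then show ?thesis using c0pos by blast
qed

end


context
  fixes lam :: complex and D :: "complex set"
  assumes lam1: "norm lam < 1" and finD: "finite D"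
begin

lemma lam_nz:
  assumes "card D \<ge> 2" and conn: "connected (attractor lam D)"
  shows "lam \<noteq> 0"
proof
  assume l0: "lam = 0"
  have "(attractor lam D) = D"
  proof
    show "(attractor lam D) \<subseteq> D"
    proof
      fix z assume "z \<in> (attractor lam D)"
      then obtain a where a: "\<forall>n. a n \<in> D" "z = coding lam a" by (auto simp: attractor_def)
      have "coding lam a = a 0" using split[OF lam1 finD a(1), of 1] l0 by (simp add: pre_def)
      then show "z \<in> D" using a by simp
    qed
    show "D \<subseteq> (attractor lam D)"
    proof
      fix d assume d: "d \<in> D"
      have "coding lam (\<lambda>_. d) = d" using split[OF lam1 finD, of "\<lambda>_. d" 1] d l0 by (simp add: pre_def)
      then have "\<exists>a. d = coding lam a \<and> (\<forall>n. a n \<in> D)" using d by (intro exI[of _ "\<lambda>_. d"]) simp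
      then show "d \<in> (attractor lam D)" unfolding attractor_def by blast
    qed
  qed
  then have "D = {} \<or> (\<exists>a. D = {a})" using connected_finite_iff_sing[of D] conn finD by simp
  then show False using assms(1) by auto
qed

lemma main:
  assumes card2: "card D \<ge> 2" and pcf: "post_critically_finite lam D" and conn: "connected (attractor lam D)"
  shows "bounded_turning (attractor lam D)"
proof -
  have Dne: "D \<noteq> {}" using card2 by auto
  have lam0: "lam \<noteq> 0" using lam_nz card2 conn by blast
  define \<rho> where "\<rho> = norm lam"
  have rho: "0 < \<rho>" "\<rho> < 1" using lam0 lam1 by (auto simp: \<rho>_def)
  obtain c0 where c0: "c0 > 0" and sepc: "\<And>n a b. (\<forall>i. a i \<in> D) \<Longrightarrow> (\<forall>i. b i \<in> D) \<Longrightarrow> tt lam a b n \<notin> Dif lam D \<Longrightarrow>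
           (\<forall>z\<in>(attractor lam D). \<forall>w\<in>(attractor lam D). c0 * \<rho> ^ n \<le> norm (FF lam a n z - FF lam b n w))"
    using sep[OF lam1 finD lam0 pcf Dne] unfolding \<rho>_def by blast
  have bE: "bounded (attractor lam D)" using compact_E[OF lam1 finD] by (rule compact_imp_bounded)
  define \<Delta> where "\<Delta> = diameter (attractor lam D)"
  have D0: "\<Delta> \<ge> 0" unfolding \<Delta>_def using bE by (rule diameter_ge_0)
  have dE: "norm (x - y) \<le> \<Delta>" if "x \<in> (attractor lam D)" "y \<in> (attractor lam D)" for x y
    using diameter_bounded_bound[OF bE that] by (simp add: \<Delta>_def dist_norm)
  define L where "L = \<Delta> / c0 + 2 * \<Delta> / (c0 * \<rho>)"
  have L1: "\<Delta> / c0 \<le> L" and L2: "2 * \<Delta> / (c0 * \<rho>) \<le> L"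
    unfolding L_def using D0 c0 rho by auto
  show ?thesis unfolding bounded_turning_def
  proof (intro exI[of _ L] ballI)
    fix z0 z1 assume z0: "z0 \<in> (attractor lam D)" and z1: "z1 \<in> (attractor lam D)"
    obtain a where a: "\<forall>n. a n \<in> D" "z0 = coding lam a" using z0 by (auto simp: attractor_def)
    obtain b where b: "\<forall>n. b n \<in> D" "z1 = coding lam b" using z1 by (auto simp: attractor_def)
    define \<delta> where "\<delta> = dist z0 z1"
    show "\<exists>C\<subseteq>(attractor lam D). connected C \<and> z0 \<in> C \<and> z1 \<in> C \<and> diameter C \<le> L * dist z0 z1"
    proof (cases "z0 = z1")
      case True
      then show ?thesis using z0 by (intro exI[of _ "{z0}"]) auto
    next
      case False
      then have dpos: "\<delta> > 0" unfolding \<delta>_def by simp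
      show ?thesis
      proof (cases "\<delta> \<ge> c0")
        case True
        have "diameter (attractor lam D) \<le> \<Delta> / c0 * c0" using c0 by (simp add: \<Delta>_def)
        also have "\<dots> \<le> \<Delta> / c0 * \<delta>" using True D0 c0 by (intro mult_left_mono) auto
        also have "\<dots> \<le> L * \<delta>" using L1 dpos by (intro mult_right_mono) auto
        finally show ?thesis using z0 z1 conn unfolding \<delta>_def by blast
      next
        case False
        have "(\<lambda>N. c0 * \<rho> ^ N) \<longlonglongrightarrow> c0 * 0"
          by (intro tendsto_intros) (use rho in auto)
        then have "eventually (\<lambda>N. c0 * \<rho> ^ N < \<delta>) sequentially"
          using dpos by (simp add: order_tendsto_iff)
        then have ex: "\<exists>N. c0 * \<rho> ^ N \<le> \<delta>"
          by (meson eventually_sequentially order.refl less_imp_le)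
        define N where "N = (LEAST N. c0 * \<rho> ^ N \<le> \<delta>)"
        have N1: "c0 * \<rho> ^ N \<le> \<delta>" unfolding N_def by (rule LeastI_ex[OF ex])
        have N0: "N \<noteq> 0" using N1 False by (cases N) auto
        define n where "n = N - 1"
        have Nn: "N = Suc n" using N0 unfolding n_def by simp
        have n1: "\<delta> < c0 * \<rho> ^ n"
        proof -
          have "n < N" using Nn by simp
          then have "\<not> c0 * \<rho> ^ n \<le> \<delta>" unfolding N_def by (rule not_less_Least)
          then show ?thesis by simp
        qed
        have n2: "c0 * (\<rho> * \<rho> ^ n) \<le> \<delta>" using N1 Nn by simp
        let ?C1 = "FF lam a n ` (attractor lam D)" and ?C2 = "FF lam b n ` (attractor lam D)"
        have z0C: "z0 \<in> ?C1" using cod_cell[OF lam1 finD a(1), of n] a(2) by blast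
        have z1C: "z1 \<in> ?C2" using cod_cell[OF lam1 finD b(1), of n] b(2) by blast
        have tD: "tt lam a b n \<in> Dif lam D"
        proof (rule ccontr)
          assume "tt lam a b n \<notin> Dif lam D"
          then have "c0 * \<rho> ^ n \<le> norm (FF lam a n (coding lam (sh a n)) - FF lam b n (coding lam (sh b n)))"
            using sepc[OF a(1) b(1)] cod_cell[OF lam1 finD a(1), of n] cod_cell[OF lam1 finD b(1), of n] by blast
          also have "\<dots> = \<delta>"
            using cod_cell[OF lam1 finD a(1), of n] cod_cell[OF lam1 finD b(1), of n] a(2) b(2)
            by (simp add: \<delta>_def dist_norm)
          finally show False using n1 by simp
        qed
        then obtain zz ww where zz: "zz \<in> (attractor lam D)" "ww \<in> (attractor lam D)" "tt lam a b n = zz - ww"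
          unfolding Dif_def[OF lam1 finD] by blast
        define p where "p = FF lam a n zz"
        have "FF lam a n zz - FF lam b n ww = 0" using id1[OF lam1 finD lam0] zz(3) by simp
        then have e: "p = FF lam b n ww" unfolding p_def by simp
        have pC: "p \<in> ?C1" "p \<in> ?C2"
        proof -
          show "p \<in> ?C1" unfolding p_def using zz(1) by (rule imageI)
          show "p \<in> ?C2" unfolding e using zz(2) by (rule imageI)
        qed
        have close: "norm (x - p) \<le> \<rho> ^ n * \<Delta>" if "x \<in> ?C1 \<union> ?C2" for x
        proof -
          have "\<exists>c u v. (c = a \<or> c = b) \<and> u \<in> (attractor lam D) \<and> v \<in> (attractor lam D) \<and> x = FF lam c n u \<and> p = FF lam c n v"
          proof (cases "x \<in> ?C1")
            case True
            then obtain u where "u \<in> (attractor lam D)" "x = FF lam a n u" by blast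
            then show ?thesis using zz(1) unfolding p_def by blast
          next
            case False
            then have "x \<in> ?C2" using that by blast
            then obtain u where "u \<in> (attractor lam D)" "x = FF lam b n u" by blast
            moreover have "p = FF lam b n ww" using e .
            ultimately show ?thesis using zz(2) by blast
          qed
          then obtain c u v where cuv: "c = a \<or> c = b" "u \<in> (attractor lam D)" "v \<in> (attractor lam D)" "x = FF lam c n u" "p = FF lam c n v"
            by blast
          have "x - p = lam ^ n * (u - v)" using cuv(4,5) by (simp add: FF_def[OF lam1 finD] algebra_simps)
          then have "norm (x - p) = \<rho> ^ n * norm (u - v)" by (simp add: norm_mult norm_power \<rho>_def)
          also have "\<dots> \<le> \<rho> ^ n * \<Delta>" using dE[OF cuv(2,3)] rho by (intro mult_left_mono) auto
          finally show ?thesis .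
        qed
        have diamC: "diameter (?C1 \<union> ?C2) \<le> 2 * \<rho> ^ n * \<Delta>"
        proof (rule diameter_le)
          show "?C1 \<union> ?C2 \<noteq> {} \<or> 0 \<le> 2 * \<rho> ^ n * \<Delta>" using z0C by blast
          fix x y assume "x \<in> ?C1 \<union> ?C2" "y \<in> ?C1 \<union> ?C2"
          then have "norm (x - p) \<le> \<rho> ^ n * \<Delta>" "norm (y - p) \<le> \<rho> ^ n * \<Delta>" using close by auto
          moreover have "norm (x - y) \<le> norm (x - p) + norm (y - p)"
            using norm_triangle_ineq4[of "x - p" "y - p"] by simp
          ultimately show "norm (x - y) \<le> 2 * \<rho> ^ n * \<Delta>" by simp
        qed
        have "\<rho> ^ n * (c0 * \<rho>) \<le> \<delta>" using n2 by (simp add: algebra_simps)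
        then have "\<rho> ^ n \<le> \<delta> / (c0 * \<rho>)"
          using c0 rho by (subst pos_le_divide_eq) auto
        then have "2 * \<rho> ^ n * \<Delta> \<le> 2 * (\<delta> / (c0 * \<rho>)) * \<Delta>"
          using D0 by (intro mult_right_mono) auto
        also have "\<dots> = 2 * \<Delta> / (c0 * \<rho>) * \<delta>" by simp
        also have "\<dots> \<le> L * \<delta>" using L2 dpos by (intro mult_right_mono) auto
        finally have dC: "diameter (?C1 \<union> ?C2) \<le> L * \<delta>" using diamC by linarith
        have sub: "?C1 \<union> ?C2 \<subseteq> (attractor lam D)" using FF_in[OF lam1 finD a(1)] FF_in[OF lam1 finD b(1)] by blast
        have cont: "continuous_on (attractor lam D) (FF lam c n)" for c
          unfolding FF_def[OF lam1 finD] by (intro continuous_intros)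
        have "connected (?C1 \<union> ?C2)"
          by (rule connected_Un) (use connected_continuous_image[OF cont conn] pC in auto)
        then show ?thesis using sub z0C z1C dC unfolding \<delta>_def by blast
      qed
    qed
  qed
qed

end

theorem corollary6p2:
  fixes lam :: complex and D :: "complex set" and m :: nat
  assumes "m \<ge> 2" and "finite D" and "card D = m"
    and "norm lam < 1"
    and "post_critically_finite lam D"
    and "connected (attractor lam D)"
  shows "bounded_turning (attractor lam D)"
  using main[OF assms(4) assms(2)] assms by simp


end
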